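(* Let $n$ and $k\geq 2$ be positive integers, let $P=(p_1,\dots,p_k)$ be a probability distribution on $\{1,\dots,k\}$, let $X=(X_1,\dots,X_k)$ be multinomially distributed with $n$ samples and probabilities $P$, and let $V_{n,k,P}=D\big((X_1/n,\dots,X_k/n)\,\|\,(p_1,\dots,p_k)\big)$. Then for all real $0\leq t<n$, \[ \mathbb{E}\big[\exp(t\cdot V_{n,k,P})\big]\leq\left(\frac{1}{1-t/n}\right)^{k-1}. \]
   Context: For probability distributions $(q_1,\dots,q_k)$ and $(p_1,\dots,p_k)$ on a finite set, the Kullback--Leibler divergence is $D\big((q_1,\dots,q_k)\,\|\,(p_1,\dots,p_k)\big)=\sum_{i=1}^k q_i\log\frac{q_i}{p_i}$, with natural logarithm and the usual conventions $0\log(0/p)=0$. *)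

theory Defs
  imports "HOL-Analysis.Analysis"
begin

text \<open>Distributions on {1..k} are functions nat => real; only values on {1..k} matter.\<close>

definition prob_dist :: "nat \<Rightarrow> (nat \<Rightarrow> real) \<Rightarrow> bool" where
  "prob_dist k p \<longleftrightarrow> (\<forall>i\<in>{1..k}. p i \<ge> 0) \<and> (\<Sum>i=1..k. p i) = 1"

definition KL :: "nat \<Rightarrow> (nat \<Rightarrow> real) \<Rightarrow> (nat \<Rightarrow> real) \<Rightarrow> real" where
  "KL k q p = (\<Sum>i=1..k. if q i = 0 then 0 else q i * ln (q i / p i))"

definition count_vectors :: "nat \<Rightarrow> nat \<Rightarrow> (nat \<Rightarrow> nat) set" where
  "count_vectors n k = {x. (\<forall>i. i \<notin> {1..k} \<longrightarrow> x i = 0) \<and> (\<Sum>i=1..k. x i) = n}"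

definition multinomial_pmf :: "nat \<Rightarrow> nat \<Rightarrow> (nat \<Rightarrow> real) \<Rightarrow> (nat \<Rightarrow> nat) \<Rightarrow> real" where
  "multinomial_pmf n k p x =
     fact n / (\<Prod>i=1..k. fact (x i)) * (\<Prod>i=1..k. p i ^ x i)"

definition multinomial_expectation ::
  "nat \<Rightarrow> nat \<Rightarrow> (nat \<Rightarrow> real) \<Rightarrow> ((nat \<Rightarrow> nat) \<Rightarrow> real) \<Rightarrow> real" where
  "multinomial_expectation n k p f =
     (\<Sum>x\<in>count_vectors n k. multinomial_pmf n k p x * f x)"

end

theory Submission
  imports Defs
begin

lemma pascal_step:
  fixes f :: "nat \<Rightarrow> real"
  shows "(\<Sum>j\<le>Suc n. real (Suc n choose j) * (-1)^(Suc n - j) * f j)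
       = (\<Sum>j\<le>n. real (n choose j) * (-1)^(n-j) * (f (Suc j) - f j))"
proof -
  define g where "g i = real (n choose i) * (-1)^(Suc n - i) * f i" for i
  define h where "h j = real (Suc n choose j) * (-1)^(Suc n - j) * f j" for j
  have h0: "(\<Sum>j\<le>Suc n. h j) = h 0 + (\<Sum>j\<le>n. h (Suc j))"
    by (rule sum.atMost_Suc_shift)
  have hS: "h (Suc j) = real (n choose j) * (-1)^(n-j) * f (Suc j) + g (Suc j)" for j
    by (simp add: h_def g_def algebra_simps)
  have A: "(\<Sum>j\<le>Suc n. real (Suc n choose j) * (-1)^(Suc n - j) * f j)
     = (-1)^(Suc n) * f 0 + (\<Sum>j\<le>n. real (n choose j) * (-1)^(n-j) * f (Suc j))
       + (\<Sum>j\<le>n. g (Suc j))"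
    using h0 unfolding h_def[symmetric] hS sum.distrib by (simp add: h_def)
  have B: "(\<Sum>j\<le>Suc n. g j) = g 0 + (\<Sum>j\<le>n. g (Suc j))"
    by (rule sum.atMost_Suc_shift)
  have C: "(\<Sum>j\<le>Suc n. g j) = (\<Sum>j\<le>n. g j)"
    by (simp add: g_def)
  have D: "(\<Sum>j\<le>n. g j) = - (\<Sum>j\<le>n. real (n choose j) * (-1)^(n-j) * f j)"
    unfolding sum_negf[symmetric] g_def
    by (rule sum.cong) (auto simp: Suc_diff_le)
  have g0: "g 0 = (-1)^(Suc n) * f 0" by (simp add: g_def)
  have R: "(\<Sum>j\<le>n. real (n choose j) * (-1)^(n-j) * (f (Suc j) - f j))
     = (\<Sum>j\<le>n. real (n choose j) * (-1)^(n-j) * f (Suc j)) - (\<Sum>j\<le>n. real (n choose j) * (-1)^(n-j) * f j)"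
    by (simp add: sum_subtractf right_diff_distrib)
  show ?thesis
    unfolding A R using B C D g0 by linarith
qed

lemma fin_diff:
  fixes a b :: real
  shows "r \<le> n \<Longrightarrow> (\<Sum>j\<le>n. real (n choose j) * (-1)^(n-j) * (a + b*j)^r)
           = (if r = n then fact n * b^n else 0)"
proof (induction n arbitrary: r)
  case 0
  then show ?case by simp
next
  case (Suc n)
  have diff: "(a + b * real (Suc j))^r - (a + b*j)^r
      = (\<Sum>i<r. real (r choose i) * b^(r-i) * (a+b*j)^i)" for j
  proof -
    have "(a + b * real (Suc j))^r = ((a + b*j) + b)^r" by (simp add: algebra_simps)
    also have "\<dots> = (\<Sum>i\<le>r. real (r choose i) * (a+b*j)^i * b^(r-i))"
      by (rule binomial_ring)
    also have "\<dots> = (\<Sum>i<r. real (r choose i) * b^(r-i) * (a+b*j)^i) + (a+b*j)^r"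
      by (simp add: lessThan_Suc_atMost[symmetric] algebra_simps)
    finally show ?thesis by simp
  qed
  have "(\<Sum>j\<le>Suc n. real (Suc n choose j) * (-1)^(Suc n - j) * (a + b*j)^r)
      = (\<Sum>j\<le>n. real (n choose j) * (-1)^(n-j) * ((a + b * real (Suc j))^r - (a + b*j)^r))"
    by (rule pascal_step)
  also have "\<dots> = (\<Sum>j\<le>n. \<Sum>i<r. real (r choose i) * b^(r-i) * (real (n choose j) * (-1)^(n-j) * (a+b*j)^i))"
    by (simp only: diff sum_distrib_left mult_ac)
  also have "\<dots> = (\<Sum>i<r. real (r choose i) * b^(r-i) * (\<Sum>j\<le>n. real (n choose j) * (-1)^(n-j) * (a+b*j)^i))"
    by (subst sum.swap) (simp add: sum_distrib_left)
  also have "\<dots> = (\<Sum>i<r. real (r choose i) * b^(r-i) * (if i = n then fact n * b^n else 0))"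
    using Suc by (intro sum.cong) auto
  also have "\<dots> = (if r = Suc n then fact (Suc n) * b^(Suc n) else 0)"
  proof (cases "r = Suc n")
    case True
    have "(\<Sum>i<r. real (r choose i) * b^(r-i) * (if i = n then fact n * b^n else 0))
        = real (r choose n) * b^(r-n) * (fact n * b^n)"
      using True by (simp add: sum.delta)
    also have "\<dots> = fact (Suc n) * b^(Suc n)" using True by simp
    finally show ?thesis using True by simp
  next
    case False
    then have "r \<le> n" using Suc by simp
    then show ?thesis by (intro trans[OF sum.neutral]) auto
  qed
  finally show ?case .
qed

definition Ssum :: "real \<Rightarrow> nat \<Rightarrow> real \<Rightarrow> real \<Rightarrow> real" where
  "Ssum b n a c = (\<Sum>j\<le>n. real (n choose j) * (a + b * real j)^j * (c + b * real (n - j))^(n - j))"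

definition Tsum :: "real \<Rightarrow> nat \<Rightarrow> real \<Rightarrow> real" where
  "Tsum b n A = (\<Sum>m\<le>n. fact n / fact (n - m) * b^m * (A + b * real n)^(n - m))"

lemma S_deriv:
  "((\<lambda>c. Ssum b (Suc N) a c) has_real_derivative (real (Suc N) * Ssum b N a (c + b))) (at c)"
proof -
  define n where "n = Suc N"
  have D: "((\<lambda>c. Ssum b n a c) has_real_derivative
     (\<Sum>j\<le>n. real (n choose j) * (a + b * real j)^j * (real (n - j) * (c + b * real (n - j))^(n - j - 1)))) (at c)"
    unfolding Ssum_def
    by (auto intro!: derivative_eq_intros DERIV_sum)
  have "(\<Sum>j\<le>n. real (n choose j) * (a + b * real j)^j * (real (n - j) * (c + b * real (n - j))^(n - j - 1)))
     = (\<Sum>j\<le>N. real (n choose j) * (a + b * real j)^j * (real (n - j) * (c + b * real (n - j))^(n - j - 1)))"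
    by (simp add: n_def)
  also have "\<dots> = (\<Sum>j\<le>N. real (Suc N) * (real (N choose j) * (a + b * real j)^j * ((c + b) + b * real (N - j))^(N - j)))"
  proof (rule sum.cong)
    fix j assume "j \<in> {..N}"
    then have j: "j \<le> N" by simp
    have e1: "n - j = Suc (N - j)" using j by (simp add: n_def Suc_diff_le)
    have e2: "real (n - j) * real (n choose j) = real (Suc N) * real (N choose j)"
      using binomial_absorb_comp[of n j] unfolding n_def
      by (metis diff_Suc_1 of_nat_mult)
    have e3: "c + b * real (n - j) = (c + b) + b * real (N - j)"
      using e1 by (simp add: algebra_simps)
    have e4: "n - j - 1 = N - j" using e1 by simp
    have "real (n choose j) * (a + b * real j)^j * (real (n - j) * (c + b * real (n - j))^(n - j - 1))
        = (real (n - j) * real (n choose j)) * ((a + b * real j)^j * ((c + b) + b * real (N - j))^(N - j))"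
      unfolding e3 e4 by (simp only: mult_ac)
    also have "\<dots> = real (Suc N) * (real (N choose j) * (a + b * real j)^j * ((c + b) + b * real (N - j))^(N - j))"
      unfolding e2 by (simp only: mult_ac)
    finally show "real (n choose j) * (a + b * real j)^j * (real (n - j) * (c + b * real (n - j))^(n - j - 1))
        = real (Suc N) * (real (N choose j) * (a + b * real j)^j * ((c + b) + b * real (N - j))^(N - j))" .
  qed simp
  also have "\<dots> = real (Suc N) * Ssum b N a (c + b)"
    by (simp add: Ssum_def sum_distrib_left)
  finally show ?thesis using D by (simp add: n_def)
qed

lemma T_deriv:
  "((\<lambda>c. Tsum b (Suc N) (a + c)) has_real_derivative (real (Suc N) * Tsum b N (a + c + b))) (at c)"
proof -
  define n where "n = Suc N"
  have D: "((\<lambda>c. Tsum b n (a + c)) has_real_derivative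
     (\<Sum>m\<le>n. fact n / fact (n - m) * b^m * (real (n - m) * (a + c + b * real n)^(n - m - 1)))) (at c)"
    unfolding Tsum_def
    by (auto intro!: derivative_eq_intros DERIV_sum)
  have "(\<Sum>m\<le>n. fact n / fact (n - m) * b^m * (real (n - m) * (a + c + b * real n)^(n - m - 1)))
     = (\<Sum>m\<le>N. fact n / fact (n - m) * b^m * (real (n - m) * (a + c + b * real n)^(n - m - 1)))"
    by (simp add: n_def)
  also have "\<dots> = (\<Sum>m\<le>N. real (Suc N) * (fact N / fact (N - m) * b^m * ((a + c + b) + b * real N)^(N - m)))"
  proof (rule sum.cong)
    fix m assume "m \<in> {..N}"
    then have m: "m \<le> N" by simp
    have e1: "n - m = Suc (N - m)" using m by (simp add: n_def Suc_diff_le)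
    have f1: "fact (Suc (N - m)) = real (Suc (N - m)) * (fact (N - m) :: real)"
      by (rule fact_Suc)
    have f2: "fact n = real (Suc N) * (fact N :: real)"
      unfolding n_def by (rule fact_Suc)
    have fpos: "(fact (N - m) :: real) > 0" by simp
    have gen: "\<And>A r F::real. r \<noteq> 0 \<Longrightarrow> A / (r * F) * r = A / F"
      by (simp add: field_simps)
    have "fact n / fact (n - m) * real (n - m)
        = (real (Suc N) * fact N) / (real (Suc (N - m)) * fact (N - m)) * real (Suc (N - m))"
      unfolding e1 f1 f2 by (rule refl)
    also have "\<dots> = real (Suc N) * fact N / fact (N - m)"
      by (rule gen) simp
    finally have e2: "fact n / fact (n - m) * real (n - m) = real (Suc N) * (fact N / fact (N - m) :: real)"
      by simp
    have e3: "a + c + b * real n = (a + c + b) + b * real N"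
      by (simp add: n_def algebra_simps)
    have e4: "n - m - 1 = N - m" using e1 by simp
    have "fact n / fact (n - m) * b^m * (real (n - m) * (a + c + b * real n)^(n - m - 1))
        = (fact n / fact (n - m) * real (n - m)) * (b^m * ((a + c + b) + b * real N)^(N - m))"
      unfolding e3 e4 by (simp only: mult_ac)
    also have "\<dots> = real (Suc N) * (fact N / fact (N - m) * b^m * ((a + c + b) + b * real N)^(N - m))"
      unfolding e2 by (simp only: mult_ac)
    finally show "fact n / fact (n - m) * b^m * (real (n - m) * (a + c + b * real n)^(n - m - 1))
        = real (Suc N) * (fact N / fact (N - m) * b^m * ((a + c + b) + b * real N)^(N - m))" .
  qed simp
  also have "\<dots> = real (Suc N) * Tsum b N (a + c + b)"
    by (simp add: Tsum_def sum_distrib_left)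
  finally show ?thesis using D by (simp add: n_def)
qed

lemma S_at_root: "Ssum b n a (- a - b * real n) = fact n * b^n"
proof -
  have "Ssum b n a (- a - b * real n) = (\<Sum>j\<le>n. real (n choose j) * (-1)^(n-j) * (a + b*j)^n)"
    unfolding Ssum_def
  proof (rule sum.cong)
    fix j assume "j \<in> {..n}"
    then have j: "j \<le> n" by simp
    have rj: "real (n - j) = real n - real j" using j by (simp add: of_nat_diff)
    have "- a - b * real n + b * real (n - j) = - (a + b * real j)"
      unfolding rj by (simp add: right_diff_distrib)
    then have E1: "(- a - b * real n + b * real (n - j))^(n - j) = (-1)^(n-j) * (a + b*j)^(n-j)"
      by (metis power_minus)
    have E2: "(a + b*j)^j * (a + b*j)^(n-j) = (a + b*j)^n"
      using j by (metis le_add_diff_inverse power_add)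
    show "real (n choose j) * (a + b * real j)^j * (- a - b * real n + b * real (n - j))^(n - j)
        = real (n choose j) * (-1)^(n-j) * (a + b*j)^n"
      unfolding E1 E2[symmetric] by (simp only: mult_ac)
  qed simp
  also have "\<dots> = fact n * b^n" using fin_diff[of n n a b] by simp
  finally show ?thesis .
qed

lemma T_at_root: "Tsum b n (- b * real n) = fact n * b^n"
proof -
  have "Tsum b n (- b * real n) = (\<Sum>m\<le>n. if m = n then fact n * b^n else 0)"
    unfolding Tsum_def
    by (intro sum.cong) auto
  also have "\<dots> = fact n * b^n" by simp
  finally show ?thesis .
qed

lemma abel_ST: "Ssum b n a c = Tsum b n (a + c)"
proof (induction n arbitrary: a c)
  case 0
  then show ?case by (simp add: Ssum_def Tsum_def)
next
  case (Suc N)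
  define g where "g c = Ssum b (Suc N) a c - Tsum b (Suc N) (a + c)" for c
  have "\<forall>x. (g has_real_derivative 0) (at x)"
  proof
    fix x
    have "(g has_real_derivative (real (Suc N) * Ssum b N a (x + b) - real (Suc N) * Tsum b N (a + x + b))) (at x)"
      unfolding g_def by (intro DERIV_diff S_deriv T_deriv)
    moreover have "Ssum b N a (x + b) = Tsum b N (a + x + b)"
      using Suc.IH[of a "x + b"] by (simp add: add.assoc)
    ultimately show "(g has_real_derivative 0) (at x)" by simp
  qed
  then have "g c = g (- a - b * real (Suc N))" by (rule DERIV_isconst_all)
  also have "\<dots> = 0"
    unfolding g_def using S_at_root[of b "Suc N" a] T_at_root[of b "Suc N"] by simp
  finally show ?case unfolding g_def by simp
qed

lemma amgm:
  fixes u v s :: real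
  assumes "0 \<le> u" "0 \<le> v" "0 \<le> s" "s \<le> 1"
  shows "u powr (1 - s) * v powr s \<le> (1 - s) * u + s * v"
proof (cases "u = 0 \<or> v = 0")
  case True
  then show ?thesis using assms by auto
next
  case False
  then show ?thesis using assms Youngs_inequality_0[of "1 - s" s u v] by auto
qed

lemma geom_le: "0 \<le> s \<Longrightarrow> s < (1::real) \<Longrightarrow> (\<Sum>m\<le>n. s^m) \<le> 1 / (1 - s)"
proof -
  assume s: "0 \<le> s" "s < 1"
  have "(\<Sum>m\<le>n. s^m) = (\<Sum>m<Suc n. s^m)" by (simp add: lessThan_Suc_atMost)
  also have "\<dots> = (s^Suc n - 1) / (s - 1)" using s by (intro geometric_sum) simp
  also have "\<dots> = (1 - s^Suc n) / (1 - s)" by (metis minus_diff_eq minus_divide_divide)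
  also have "\<dots> \<le> 1 / (1 - s)" using s by (simp add: divide_right_mono)
  finally show ?thesis .
qed

lemma fact_ratio_le: "m \<le> n \<Longrightarrow> fact n / fact (n - m) \<le> (real n)^m"
proof -
  assume m: "m \<le> n"
  have dv: "fact (n - m) dvd (fact n :: nat)" by (rule fact_dvd) simp
  have "fact n / fact (n - m) = real (fact n div fact (n - m))"
    using dv by (simp add: real_of_nat_div)
  also have "\<dots> \<le> real (n ^ m)"
    using fact_div_fact_le_pow[OF m] by (simp only: of_nat_le_iff)
  finally show ?thesis by simp
qed

definition Bin :: "nat \<Rightarrow> real \<Rightarrow> real \<Rightarrow> real" where
  "Bin n q s = (\<Sum>j\<le>n. real (n choose j) * (q powr (1 - s) * (real j / real n) powr s)^j
       * ((1 - q) powr (1 - s) * (real (n - j) / real n) powr s)^(n - j))"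

lemma Bin_bound:
  assumes q: "0 \<le> q" "q \<le> 1" and s: "0 \<le> s" "s < 1"
  shows "Bin n q s \<le> 1 / (1 - s)"
proof (cases "n = 0")
  case True
  then show ?thesis using s by (simp add: Bin_def)
next
  case False
  then have npos: "real n > 0" by simp
  define b where "b = s / real n"
  define a where "a = (1 - s) * q"
  define c where "c = (1 - s) * (1 - q)"
  have "Bin n q s \<le> Ssum b n a c"
    unfolding Bin_def Ssum_def
  proof (rule sum_mono)
    fix j assume j: "j \<in> {..n}"
    have h1: "q powr (1 - s) * (real j / real n) powr s \<le> a + b * real j"
      using amgm[of q "real j / real n" s] q s unfolding a_def b_def by simp
    have h2: "(1 - q) powr (1 - s) * (real (n - j) / real n) powr s \<le> c + b * real (n - j)"
      using amgm[of "1 - q" "real (n - j) / real n" s] q s unfolding c_def b_def by simp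
    have "(q powr (1 - s) * (real j / real n) powr s)^j \<le> (a + b * real j)^j"
      by (rule power_mono[OF h1]) simp
    moreover have "((1 - q) powr (1 - s) * (real (n - j) / real n) powr s)^(n - j) \<le> (c + b * real (n - j))^(n - j)"
      by (rule power_mono[OF h2]) simp
    moreover have a0: "0 \<le> a + b * real j" unfolding a_def b_def using q s by simp
    ultimately show "real (n choose j) * (q powr (1 - s) * (real j / real n) powr s)^j
       * ((1 - q) powr (1 - s) * (real (n - j) / real n) powr s)^(n - j)
       \<le> real (n choose j) * (a + b * real j)^j * (c + b * real (n - j))^(n - j)"
      by (intro mult_mono mult_nonneg_nonneg) auto
  qed
  also have "\<dots> = Tsum b n (a + c)" by (rule abel_ST)
  also have "\<dots> = (\<Sum>m\<le>n. fact n / fact (n - m) * b^m)"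
  proof -
    have "a + c + b * real n = 1" unfolding a_def b_def c_def using npos by (simp add: algebra_simps)
    then show ?thesis unfolding Tsum_def by simp
  qed
  also have "\<dots> \<le> (\<Sum>m\<le>n. s^m)"
  proof (rule sum_mono)
    fix m assume "m \<in> {..n}"
    then have m: "m \<le> n" by simp
    have "fact n / fact (n - m) * b^m \<le> (real n)^m * b^m"
      using fact_ratio_le[OF m] s unfolding b_def by (intro mult_right_mono) auto
    also have "\<dots> = s^m" unfolding b_def using npos by (simp add: power_divide)
    finally show "fact n / fact (n - m) * b^m \<le> s^m" .
  qed
  also have "\<dots> \<le> 1 / (1 - s)" using geom_le s by blast
  finally show ?thesis .
qed


lemma cv_le: "x \<in> count_vectors n k \<Longrightarrow> i \<in> {1..k} \<Longrightarrow> x i \<le> n"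
  unfolding count_vectors_def
  by (metis (mono_tags, lifting) finite_atLeastAtMost mem_Collect_eq member_le_sum zero_le)

lemma cv_out: "x \<in> count_vectors n k \<Longrightarrow> i \<notin> {1..k} \<Longrightarrow> x i = 0"
  unfolding count_vectors_def by blast

lemma cv_sum: "x \<in> count_vectors n k \<Longrightarrow> (\<Sum>i=1..k. x i) = n"
  unfolding count_vectors_def by blast

lemma finite_cv: "finite (count_vectors n k)"
proof -
  have "count_vectors n k \<subseteq> {f. \<forall>i. (i \<in> {1..k} \<longrightarrow> f i \<in> {..n}) \<and> (i \<notin> {1..k} \<longrightarrow> f i = 0)}"
    using cv_le cv_out by blast
  moreover have "finite {f. \<forall>i. (i \<in> {1..k} \<longrightarrow> f i \<in> {..n}) \<and> (i \<notin> {1..k} \<longrightarrow> f i = (0::nat))}"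
    by (rule finite_set_of_finite_funs) auto
  ultimately show ?thesis by (rule finite_subset)
qed

lemma cv_zero: "count_vectors 0 k = {\<lambda>_. 0}"
proof
  show "count_vectors 0 k \<subseteq> {\<lambda>_. 0}"
  proof
    fix x assume x: "x \<in> count_vectors 0 k"
    have "x i = 0" for i
      using cv_le[OF x, of i] cv_out[OF x, of i] by (cases "i \<in> {1..k}") auto
    then show "x \<in> {\<lambda>_. 0}" by auto
  qed
  show "{\<lambda>_. 0} \<subseteq> count_vectors 0 k" by (auto simp: count_vectors_def)
qed

lemma cv_one: "count_vectors n (Suc 0) = {(\<lambda>_. 0)(1 := n)}"
proof
  show "count_vectors n (Suc 0) \<subseteq> {(\<lambda>_. 0)(1 := n)}"
  proof
    fix x assume x: "x \<in> count_vectors n (Suc 0)"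
    have "x i = ((\<lambda>_. 0)(1 := n)) i" for i
      using cv_sum[OF x] cv_out[OF x, of i] by (cases "i = 1") auto
    then show "x \<in> {(\<lambda>_. 0)(1 := n)}" by auto
  qed
  show "{(\<lambda>_. 0)(1 := n)} \<subseteq> count_vectors n (Suc 0)" by (auto simp: count_vectors_def)
qed

lemma cv_split:
  fixes f :: "(nat \<Rightarrow> nat) \<Rightarrow> real"
  shows "(\<Sum>x\<in>count_vectors n (Suc k). f x)
       = (\<Sum>j\<le>n. \<Sum>y\<in>count_vectors (n - j) k. f (y(Suc k := j)))"
proof -
  define h where "h = (\<lambda>(j, y). (y(Suc k := j)) :: nat \<Rightarrow> nat)"
  define g where "g = (\<lambda>x::nat\<Rightarrow>nat. (x (Suc k), x(Suc k := 0)))"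
  define S where "S = Sigma {..n} (\<lambda>j. count_vectors (n - j) k)"
  have bij: "bij_betw h S (count_vectors n (Suc k))"
  proof (rule bij_betw_byWitness[where f' = g])
    show "\<forall>a\<in>S. g (h a) = a"
    proof
      fix a assume "a \<in> S"
      then obtain j y where a: "a = (j, y)" "y \<in> count_vectors (n - j) k" unfolding S_def by auto
      have "y (Suc k) = 0" using cv_out[OF a(2), of "Suc k"] by simp
      then show "g (h a) = a" unfolding a g_def h_def by auto
    qed
    show "\<forall>a'\<in>count_vectors n (Suc k). h (g a') = a'"
      unfolding g_def h_def by auto
    show "h ` S \<subseteq> count_vectors n (Suc k)"
    proof
      fix x assume "x \<in> h ` S"
      then obtain j y where jy: "j \<le> n" "y \<in> count_vectors (n - j) k" "x = y(Suc k := j)"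
        unfolding S_def h_def by auto
      have out: "x i = 0" if "i \<notin> {1..Suc k}" for i
        using that cv_out[OF jy(2), of i] jy(3) by auto
      have "(\<Sum>i=1..Suc k. x i) = (\<Sum>i=1..k. x i) + x (Suc k)" by simp
      also have "(\<Sum>i=1..k. x i) = (\<Sum>i=1..k. y i)" using jy(3) by (intro sum.cong) auto
      also have "\<dots> = n - j" using cv_sum[OF jy(2)] .
      finally have "(\<Sum>i=1..Suc k. x i) = n" using jy by simp
      then show "x \<in> count_vectors n (Suc k)" using out unfolding count_vectors_def by blast
    qed
    show "g ` count_vectors n (Suc k) \<subseteq> S"
    proof
      fix z assume "z \<in> g ` count_vectors n (Suc k)"
      then obtain x where x: "x \<in> count_vectors n (Suc k)" "z = g x" by auto
      have le: "x (Suc k) \<le> n" using cv_le[OF x(1), of "Suc k"] by simp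
      have "(\<Sum>i=1..Suc k. x i) = (\<Sum>i=1..k. x i) + x (Suc k)" by simp
      then have s: "(\<Sum>i=1..k. x i) = n - x (Suc k)" using cv_sum[OF x(1)] by simp
      have "(\<Sum>i=1..k. (x(Suc k := 0)) i) = (\<Sum>i=1..k. x i)" by (intro sum.cong) auto
      then have "x(Suc k := 0) \<in> count_vectors (n - x (Suc k)) k"
        using s cv_out[OF x(1)] unfolding count_vectors_def by auto
      then show "z \<in> S" unfolding S_def x(2) g_def using le by auto
    qed
  qed
  have "(\<Sum>x\<in>count_vectors n (Suc k). f x) = (\<Sum>a\<in>S. f (h a))"
    using sum.reindex_bij_betw[OF bij, of f] by simp
  also have "\<dots> = (\<Sum>j\<le>n. \<Sum>y\<in>count_vectors (n - j) k. f (h (j, y)))"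
    unfolding S_def by (subst sum.Sigma) (auto simp: finite_cv split_beta)
  finally show ?thesis by (simp add: h_def)
qed


definition W :: "nat \<Rightarrow> nat \<Rightarrow> (nat \<Rightarrow> real) \<Rightarrow> real \<Rightarrow> real" where
  "W k n p s = (\<Sum>x\<in>count_vectors n k. fact n / (\<Prod>i=1..k. fact (x i))
      * (\<Prod>i=1..k. (p i powr (1 - s) * (real (x i) / real n) powr s) ^ x i))"

lemma W_zero: "W k 0 p s = 1"
  by (simp add: W_def cv_zero)

lemma W_one: "p 1 = 1 \<Longrightarrow> W (Suc 0) n p s = 1"
  by (cases "n = 0") (simp_all add: W_def cv_one)

lemma W_term:
  fixes p :: "nat \<Rightarrow> real" and s :: real
  assumes pnn: "\<And>i. i \<in> {1..k} \<Longrightarrow> p i \<ge> 0" and P: "P = (\<Sum>i=1..k. p i)"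
    and j: "j \<le> n" and y: "y \<in> count_vectors (n - j) k"
  shows "fact n / (\<Prod>i=1..Suc k. fact ((y(Suc k := j)) i))
      * (\<Prod>i=1..Suc k. (p i powr (1 - s) * (real ((y(Suc k := j)) i) / real n) powr s) ^ (y(Suc k := j)) i)
    = real (n choose j) * (p (Suc k) powr (1 - s) * (real j / real n) powr s) ^ j
      * (P powr (1 - s) * (real (n - j) / real n) powr s) ^ (n - j)
      * (fact (n - j) / (\<Prod>i=1..k. fact (y i))
         * (\<Prod>i=1..k. ((p i / P) powr (1 - s) * (real (y i) / real (n - j)) powr s) ^ y i))"
proof -
  define x where "x = y(Suc k := j)"
  define \<gamma> where "\<gamma> = P powr (1 - s) * (real (n - j) / real n) powr s"
  define \<beta> where "\<beta> = (p (Suc k) powr (1 - s) * (real j / real n) powr s) ^ j"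
  define Y where "Y = (\<Prod>i=1..k. fact (y i) :: real)"
  define G where "G = (\<Prod>i=1..k. ((p i / P) powr (1 - s) * (real (y i) / real (n - j)) powr s) ^ y i)"
  have Ppos: "P \<ge> 0" unfolding P using pnn by (intro sum_nonneg) auto
  have xi: "x i = y i" if "i \<in> {1..k}" for i using that unfolding x_def by auto
  have xk: "x (Suc k) = j" unfolding x_def by simp
  have a0: "(\<Prod>i=1..k. fact (x i) :: real) = Y"
    unfolding Y_def by (rule prod.cong) (auto simp: xi)
  have a: "(\<Prod>i=1..Suc k. fact (x i) :: real) = Y * fact j"
    using a0 xk by (simp add: prod.cl_ivl_Suc)
  have b0: "(\<Prod>i=1..k. (p i powr (1 - s) * (real (x i) / real n) powr s) ^ x i)
      = (\<Prod>i=1..k. (p i powr (1 - s) * (real (y i) / real n) powr s) ^ y i)"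
    by (rule prod.cong) (auto simp: xi)
  have b: "(\<Prod>i=1..Suc k. (p i powr (1 - s) * (real (x i) / real n) powr s) ^ x i)
      = (\<Prod>i=1..k. (p i powr (1 - s) * (real (y i) / real n) powr s) ^ y i) * \<beta>"
    unfolding \<beta>_def using b0 xk by (simp add: prod.cl_ivl_Suc)
  have c: "(p i powr (1 - s) * (real (y i) / real n) powr s) ^ y i
      = \<gamma> ^ y i * ((p i / P) powr (1 - s) * (real (y i) / real (n - j)) powr s) ^ y i"
    if i: "i \<in> {1..k}" for i
  proof -
    have pi: "p i = P * (p i / P)"
    proof (cases "P = 0")
      case True
      then have "p i = 0" using pnn i unfolding P by (subst (asm) sum_nonneg_eq_0_iff) auto
      then show ?thesis by simp
    qed simp
    have yi: "real (y i) / real n = (real (n - j) / real n) * (real (y i) / real (n - j))"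
    proof (cases "n - j = 0")
      case True
      then have "y i = 0" using cv_le[OF y i] by simp
      then show ?thesis by simp
    qed simp
    have "p i powr (1 - s) * (real (y i) / real n) powr s
        = (P * (p i / P)) powr (1 - s) * ((real (n - j) / real n) * (real (y i) / real (n - j))) powr s"
      using pi yi by simp
    also have "\<dots> = \<gamma> * ((p i / P) powr (1 - s) * (real (y i) / real (n - j)) powr s)"
    proof -
      have m1: "(P * (p i / P)) powr (1 - s) = P powr (1 - s) * (p i / P) powr (1 - s)"
        using Ppos pnn[OF i] by (intro powr_mult; simp)
      have m2: "((real (n - j) / real n) * (real (y i) / real (n - j))) powr s
          = (real (n - j) / real n) powr s * (real (y i) / real (n - j)) powr s"
        by (intro powr_mult; simp)
      show ?thesis unfolding m1 m2 \<gamma>_def by (simp only: mult_ac)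
    qed
    finally show ?thesis by (simp add: power_mult_distrib)
  qed
  have d: "(\<Prod>i=1..k. \<gamma> ^ y i) = \<gamma> ^ (n - j)"
    using power_sum[of \<gamma> y "{1..k}"] cv_sum[OF y] by simp
  have e: "fact n / (Y * fact j) = real (n choose j) * (fact (n - j) / Y)"
  proof -
    have Ypos: "Y > 0" unfolding Y_def by (intro prod_pos) auto
    have fj: "(fact j :: real) > 0" by simp
    have H: "fact n = fact j * fact (n - j) * (real (n choose j))"
      using binomial_fact[OF j, where 'a=real] fj by (simp add: field_simps)
    show ?thesis unfolding H using Ypos fj by (simp add: field_simps)
  qed
  have "(\<Prod>i=1..k. (p i powr (1 - s) * (real (y i) / real n) powr s) ^ y i) = \<gamma> ^ (n - j) * G"
    unfolding G_def d[symmetric] prod.distrib[symmetric] using c by (intro prod.cong) auto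
  then have "fact n / (\<Prod>i=1..Suc k. fact (x i))
      * (\<Prod>i=1..Suc k. (p i powr (1 - s) * (real (x i) / real n) powr s) ^ x i)
      = real (n choose j) * (fact (n - j) / Y) * (\<gamma> ^ (n - j) * G * \<beta>)"
    unfolding a b e by simp
  also have "\<dots> = real (n choose j) * \<beta> * \<gamma> ^ (n - j) * (fact (n - j) / Y * G)"
    by (simp only: mult_ac)
  finally show ?thesis unfolding x_def \<beta>_def \<gamma>_def Y_def G_def .
qed



lemma W_rec:
  fixes p :: "nat \<Rightarrow> real" and s :: real
  assumes pnn: "\<And>i. i \<in> {1..k} \<Longrightarrow> p i \<ge> 0" and P: "P = (\<Sum>i=1..k. p i)"
  shows "W (Suc k) n p s = (\<Sum>j\<le>n. real (n choose j) * (p (Suc k) powr (1 - s) * (real j / real n) powr s) ^ j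
      * (P powr (1 - s) * (real (n - j) / real n) powr s) ^ (n - j) * W k (n - j) (\<lambda>i. p i / P) s)"
  unfolding W_def cv_split
proof (rule sum.cong[OF refl])
  fix j assume "j \<in> {..n}"
  then have j: "j \<le> n" by simp
  show "(\<Sum>y\<in>count_vectors (n - j) k. fact n / (\<Prod>i=1..Suc k. fact ((y(Suc k := j)) i))
      * (\<Prod>i=1..Suc k. (p i powr (1 - s) * (real ((y(Suc k := j)) i) / real n) powr s) ^ (y(Suc k := j)) i))
    = real (n choose j) * (p (Suc k) powr (1 - s) * (real j / real n) powr s) ^ j
      * (P powr (1 - s) * (real (n - j) / real n) powr s) ^ (n - j)
      * (\<Sum>x\<in>count_vectors (n - j) k. fact (n - j) / (\<Prod>i=1..k. fact (x i))
         * (\<Prod>i=1..k. ((p i / P) powr (1 - s) * (real (x i) / real (n - j)) powr s) ^ x i))"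
    unfolding sum_distrib_left
    by (rule sum.cong[OF refl], rule W_term[OF pnn P j]) auto
qed

lemma W_bound:
  "prob_dist k p \<Longrightarrow> 1 \<le> k \<Longrightarrow> 0 \<le> s \<Longrightarrow> s < 1 \<Longrightarrow> W k n p s \<le> (1 / (1 - s)) ^ (k - 1)"
proof (induction k arbitrary: n p)
  case 0
  then show ?case by simp
next
  case (Suc k)
  note pd = Suc.prems(1) and s = Suc.prems(3,4)
  have pnn: "\<And>i. i \<in> {1..Suc k} \<Longrightarrow> p i \<ge> 0" and psum: "(\<Sum>i=1..Suc k. p i) = 1"
    using pd unfolding prob_dist_def by auto
  show ?case
  proof (cases "k = 0")
    case True
    then have "p 1 = 1" using psum by simp
    then show ?thesis using True W_one by simp
  next
    case False
    then have k1: "1 \<le> k" by simp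
    define P where "P = (\<Sum>i=1..k. p i)"
    define q where "q = p (Suc k)"
    define B where "B = (1 / (1 - s)) ^ (k - 1)"
    have Pq: "P + q = 1" using psum unfolding P_def q_def by simp
    have P0: "P \<ge> 0" unfolding P_def using pnn by (intro sum_nonneg) auto
    have q0: "q \<ge> 0" unfolding q_def using pnn by simp
    have B1: "1 \<le> B" unfolding B_def using s by (intro one_le_power) simp
    have pnn': "\<And>i. i \<in> {1..k} \<Longrightarrow> p i \<ge> 0" using pnn by auto
    have "W (Suc k) n p s = (\<Sum>j\<le>n. real (n choose j) * (q powr (1 - s) * (real j / real n) powr s) ^ j
      * (P powr (1 - s) * (real (n - j) / real n) powr s) ^ (n - j) * W k (n - j) (\<lambda>i. p i / P) s)"
      unfolding q_def by (rule W_rec[OF pnn' P_def])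
    also have "\<dots> \<le> (\<Sum>j\<le>n. real (n choose j) * (q powr (1 - s) * (real j / real n) powr s) ^ j
      * (P powr (1 - s) * (real (n - j) / real n) powr s) ^ (n - j) * B)"
    proof (rule sum_mono)
      fix j assume "j \<in> {..n}"
      define \<gamma> where "\<gamma> = (P powr (1 - s) * (real (n - j) / real n) powr s) ^ (n - j)"
      define C where "C = real (n choose j) * (q powr (1 - s) * (real j / real n) powr s) ^ j"
      have C0: "C \<ge> 0" unfolding C_def by simp
      have "\<gamma> * W k (n - j) (\<lambda>i. p i / P) s \<le> \<gamma> * B"
      proof (cases "P = 0")
        case False
        then have Ppos: "P > 0" using P0 by simp
        have "prob_dist k (\<lambda>i. p i / P)"
          unfolding prob_dist_def
        proof
          show "\<forall>i\<in>{1..k}. 0 \<le> p i / P" using pnn' Ppos by simp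
          have "(\<Sum>i=1..k. p i / P) = (\<Sum>i=1..k. p i) / P" by (simp add: sum_divide_distrib)
          also have "\<dots> = 1" using Ppos unfolding P_def by simp
          finally show "(\<Sum>i=1..k. p i / P) = 1" .
        qed
        then have "W k (n - j) (\<lambda>i. p i / P) s \<le> B"
          unfolding B_def using Suc.IH k1 s by blast
        moreover have "\<gamma> \<ge> 0" unfolding \<gamma>_def using P0 by simp
        ultimately show ?thesis by (simp add: mult_left_mono)
      next
        case True
        show ?thesis
        proof (cases "n - j = 0")
          case True
          then show ?thesis using B1 by (simp add: \<gamma>_def W_zero)
        next
          case False
          then have "\<gamma> = 0" unfolding \<gamma>_def using \<open>P = 0\<close> by simp
          then show ?thesis by simp
        qed
      qed
      then have "C * (\<gamma> * W k (n - j) (\<lambda>i. p i / P) s) \<le> C * (\<gamma> * B)"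
        using C0 by (metis mult_left_mono)
      then show "real (n choose j) * (q powr (1 - s) * (real j / real n) powr s) ^ j
      * (P powr (1 - s) * (real (n - j) / real n) powr s) ^ (n - j) * W k (n - j) (\<lambda>i. p i / P) s
        \<le> real (n choose j) * (q powr (1 - s) * (real j / real n) powr s) ^ j
      * (P powr (1 - s) * (real (n - j) / real n) powr s) ^ (n - j) * B"
        unfolding C_def \<gamma>_def by (simp only: mult_ac)
    qed
    also have "\<dots> = B * Bin n q s"
    proof -
      have Pe: "1 - q = P" using Pq by simp
      show ?thesis unfolding Bin_def sum_distrib_left Pe
        by (intro sum.cong) (auto simp: mult_ac)
    qed
    also have "\<dots> \<le> B * (1 / (1 - s))"
      using Bin_bound[of q s n] q0 Pq P0 s B1 by (intro mult_left_mono) auto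
    also have "\<dots> = (1 / (1 - s)) ^ (Suc k - 1)"
      unfolding B_def using k1 by (cases k) auto
    finally show ?thesis .
  qed
qed

lemma point_factor:
  fixes p s t :: real and m n :: nat
  assumes p: "p \<ge> 0" and n: "n > 0" and t: "t = s * real n"
  shows "p ^ m * exp (t * (if real m / real n = 0 then 0 else real m / real n * ln (real m / real n / p)))
       = (p powr (1 - s) * (real m / real n) powr s) ^ m"
proof (cases "m = 0")
  case True
  then show ?thesis by simp
next
  case False
  then have m: "m > 0" by simp
  define q where "q = real m / real n"
  have q: "q > 0" unfolding q_def using m n by simp
  show ?thesis
  proof (cases "p = 0")
    case True
    then show ?thesis using m by simp
  next
    case False
    then have pp: "p > 0" using p by simp
    have e1: "t * (q * ln (q / p)) = real m * (s * ln (q / p))"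
      unfolding t q_def using n by (simp add: field_simps)
    have e2: "p powr (1 - s) * q powr s = p * exp (s * ln (q / p))"
      using pp q by (simp add: powr_def ln_div exp_add[symmetric] exp_diff algebra_simps)
    have "p ^ m * exp (t * (q * ln (q / p))) = p ^ m * exp (s * ln (q / p)) ^ m"
      unfolding e1 by (simp add: exp_of_nat_mult)
    also have "\<dots> = (p powr (1 - s) * q powr s) ^ m"
      unfolding e2 by (simp add: power_mult_distrib)
    finally show ?thesis using q n unfolding q_def by simp
  qed
qed

theorem theorem1p3:
  fixes n k :: nat and p :: "nat \<Rightarrow> real" and t :: real
  assumes "n \<ge> 1" and "k \<ge> 2" and "prob_dist k p"
    and "0 \<le> t" and "t < real n"
  shows "multinomial_expectation n k p
           (\<lambda>x. exp (t * KL k (\<lambda>i. real (x i) / real n) p))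
         \<le> (1 / (1 - t / real n)) ^ (k - 1)"
proof -
  define s where "s = t / real n"
  have npos: "real n > 0" and n0: "n > 0" using assms(1) by auto
  have s0: "0 \<le> s" unfolding s_def using assms(4) npos by simp
  have s1: "s < 1" unfolding s_def using assms(5) npos by simp
  have ts: "t = s * real n" unfolding s_def using npos by simp
  have pnn: "\<And>i. i \<in> {1..k} \<Longrightarrow> p i \<ge> 0" using assms(3) unfolding prob_dist_def by auto
  have "multinomial_expectation n k p (\<lambda>x. exp (t * KL k (\<lambda>i. real (x i) / real n) p)) = W k n p s"
    unfolding multinomial_expectation_def W_def
  proof (rule sum.cong[OF refl])
    fix x assume "x \<in> count_vectors n k"
    define h where "h i = t * (if real (x i) / real n = 0 then 0 else real (x i) / real n * ln (real (x i) / real n / p i))" for i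
    have "exp (t * KL k (\<lambda>i. real (x i) / real n) p) = (\<Prod>i=1..k. exp (h i))"
      unfolding KL_def sum_distrib_left h_def by (simp add: exp_sum)
    then have "multinomial_pmf n k p x * exp (t * KL k (\<lambda>i. real (x i) / real n) p)
        = fact n / (\<Prod>i=1..k. fact (x i)) * (\<Prod>i=1..k. p i ^ x i * exp (h i))"
      unfolding multinomial_pmf_def by (simp add: prod.distrib mult_ac)
    also have "(\<Prod>i=1..k. p i ^ x i * exp (h i)) = (\<Prod>i=1..k. (p i powr (1 - s) * (real (x i) / real n) powr s) ^ x i)"
      unfolding h_def by (rule prod.cong[OF refl], rule point_factor[OF pnn n0 ts]) simp
    finally show "multinomial_pmf n k p x * exp (t * KL k (\<lambda>i. real (x i) / real n) p)
        = fact n / (\<Prod>i=1..k. fact (x i)) * (\<Prod>i=1..k. (p i powr (1 - s) * (real (x i) / real n) powr s) ^ x i)" .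
  qed
  also have "\<dots> \<le> (1 / (1 - s)) ^ (k - 1)"
    using W_bound[OF assms(3) _ s0 s1] assms(2) by simp
  finally show ?thesis unfolding s_def .
qed
end
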